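(* Let $m\ge3$, $\rho=\frac12+\frac1m$, $0<\delta\le\frac\pi{m+2}$. For $x\ge0$ put $Q(x)=x^m+P(x)+\lambda$, $g=\frac{Q'(x)}{8Q(x)^{3/2}}$, $h=\frac{Q'(x)}{4Q(x)}$ and $$\begin{pmatrix}s_{11}&s_{12}\\ s_{21}&s_{22}\end{pmatrix}=\frac1{1+g^2}\begin{pmatrix}hg-g'g&-hg^2+g'\\ -hg^2-g'&-hg-g'g\end{pmatrix},$$ where $'$ denotes $d/dx$ and $Q^{3/2}$ uses the principal branch. Then for $j,k\in\{1,2\}$, $$\int_0^\infty|s_{jk}(x,\lambda)|\,dx=O\bigl(|\lambda|^{-\rho}\bigr)$$ as $\lambda\to\infty$ in $|\arg\lambda|\le\pi-\delta$, uniformly for $a$ in any compact subset of $\mathbb C^m$.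
   Context: $a=(a_1,\dots,a_m)\in\mathbb C^m$ and $P(x)=a_1x^{m-1}+\dots+a_m$. *)

theory Defs
  imports "HOL-Analysis.Analysis"
begin

text \<open>Coefficient vector a = (a_1,...,a_m) is encoded as a function nat => complex;
  only the values a 1, ..., a m are used.  The space nat => complex carries the
  product topology (HOL-Analysis Function_Topology), so compactness of a set of
  coefficient functions projects to compactness in C^m.\<close>

definition Ppoly :: "nat \<Rightarrow> (nat \<Rightarrow> complex) \<Rightarrow> complex \<Rightarrow> complex" where
  "Ppoly m a z = (\<Sum>i=1..m. a i * z ^ (m - i))"

definition Qf :: "nat \<Rightarrow> (nat \<Rightarrow> complex) \<Rightarrow> complex \<Rightarrow> real \<Rightarrow> complex" where
  "Qf m a lam x = (of_real x) ^ m + Ppoly m a (of_real x) + lam"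

definition gf :: "nat \<Rightarrow> (nat \<Rightarrow> complex) \<Rightarrow> complex \<Rightarrow> real \<Rightarrow> complex" where
  "gf m a lam x = vector_derivative (Qf m a lam) (at x) / (8 * (Qf m a lam x) powr (3/2))"

definition hf :: "nat \<Rightarrow> (nat \<Rightarrow> complex) \<Rightarrow> complex \<Rightarrow> real \<Rightarrow> complex" where
  "hf m a lam x = vector_derivative (Qf m a lam) (at x) / (4 * Qf m a lam x)"

definition sf :: "nat \<Rightarrow> (nat \<Rightarrow> complex) \<Rightarrow> nat \<Rightarrow> nat \<Rightarrow> complex \<Rightarrow> real \<Rightarrow> complex" where
  "sf m a j k lam x =
    (let g = gf m a lam x; h = hf m a lam x;
         g' = vector_derivative (gf m a lam) (at x) in
     (if j = 1 \<and> k = 1 then h*g - g'*g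
      else if j = 1 \<and> k = 2 then - h*g^2 + g'
      else if j = 2 \<and> k = 1 then - h*g^2 - g'
      else - h*g - g'*g) / (1 + g^2))"

end

theory Submission
  imports Defs
begin

lemma intbound:
  fixes c :: real assumes c: "c > 0"
  shows "set_integrable lborel {0..} (\<lambda>x. 1/(c^2+x^2))"
    "(\<integral>x\<in>{0..}. 1/(c^2+x^2) \<partial>lborel) = pi/(2*c)"
proof -
  let ?F = "\<lambda>x. arctan (x/c) / c"
  have D: "\<And>x. (?F has_real_derivative 1/(c^2+x^2)) (at x)"
  proof -
    fix x
    have "(?F has_real_derivative (1/(1+(x/c)^2)) * (1/c) / c) (at x)"
      using c by (auto intro!: derivative_eq_intros simp: divide_inverse inverse_mult_distrib)
    moreover have "(1/(1+(x/c)^2)) * (1/c) / c = 1/(c^2+x^2)"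
    proof -
      have "c^2+x^2 > 0" using c by (simp add: add_pos_nonneg)
      then have "c * (c^2+x^2) > 0" using c by simp
      then show ?thesis using c by (simp add: field_simps power2_eq_square)
    qed
    ultimately show "(?F has_real_derivative 1/(c^2+x^2)) (at x)" by simp
  qed
  have pos: "\<And>x. c^2+x^2 > 0" using c by (simp add: add_pos_nonneg)
  have L0: "((?F \<circ> real_of_ereal) \<longlongrightarrow> 0) (at_right 0)"
    unfolding zero_ereal_def ereal_tendsto_simps
    using c by (auto intro!: tendsto_eq_intros)
  have L1: "((?F \<circ> real_of_ereal) \<longlongrightarrow> pi/(2*c)) (at_left \<infinity>)"
    unfolding ereal_tendsto_simps
  proof -
    show "(?F \<longlongrightarrow> pi/(2*c)) at_top"
    proof -
      have "LIM x at_top. inverse c * x :> at_top"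
        by (rule filterlim_tendsto_pos_mult_at_top[OF tendsto_const]) (use c in \<open>auto simp: filterlim_ident\<close>)
      then have "LIM x at_top. x / c :> at_top" by (simp add: divide_inverse mult.commute)
      then have "((\<lambda>x. arctan (x/c)) \<longlongrightarrow> pi/2) at_top"
        by (rule filterlim_compose[OF tendsto_arctan_at_top])
      then have "((\<lambda>x. arctan (x/c) / c) \<longlongrightarrow> (pi/2)/c) at_top"
        by (intro tendsto_divide) (use c in auto)
      then show ?thesis by simp
    qed
  qed
  note R = interval_integral_FTC_nonneg[where a=0 and b=\<infinity> and F="?F" and f="\<lambda>x. 1/(c^2+x^2)",
      OF _ D _ _ L0 L1]
  have R1: "set_integrable lborel {0<..} (\<lambda>x. 1/(c^2+x^2))"
    and R2: "(LBINT x=0..\<infinity>. 1/(c^2+x^2)) = pi/(2*c)"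
    using R pos by (auto simp: zero_ereal_def intro!: continuous_intros less_imp_le[OF pos] 
        simp del: )
  have R3: "(\<integral>x\<in>{0<..}. 1/(c^2+x^2) \<partial>lborel) = pi/(2*c)"
    using R2 by (simp add: interval_lebesgue_integral_def zero_ereal_def)
  have E: "set_integrable lborel {0..} f = set_integrable lborel {0<..} f" for f :: "real \<Rightarrow> real"
    by (rule set_integrable_discrete_difference[where X="{0}"]) auto
  have E2: "(\<integral>x\<in>{0..}. f x \<partial>lborel) = (\<integral>x\<in>{0<..}. f x \<partial>lborel)" for f :: "real \<Rightarrow> real"
    by (rule set_integral_discrete_difference[where X="{0}"]) auto
  show "set_integrable lborel {0..} (\<lambda>x. 1/(c^2+x^2))" using E R1 by simp
  show "(\<integral>x\<in>{0..}. 1/(c^2+x^2) \<partial>lborel) = pi/(2*c)" using E2 R3 by simp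
qed

definition P1 :: "nat \<Rightarrow> (nat \<Rightarrow> complex) \<Rightarrow> complex \<Rightarrow> complex" where
  "P1 m a z = (\<Sum>i=1..m. a i * (of_nat (m-i) * z^(m-i-1)))"
definition P2 :: "nat \<Rightarrow> (nat \<Rightarrow> complex) \<Rightarrow> complex \<Rightarrow> complex" where
  "P2 m a z = (\<Sum>i=1..m. a i * (of_nat (m-i) * (of_nat (m-i-1) * z^(m-i-1-1))))"
definition Qc :: "nat \<Rightarrow> (nat \<Rightarrow> complex) \<Rightarrow> complex \<Rightarrow> complex \<Rightarrow> complex" where
  "Qc m a lam z = z^m + Ppoly m a z + lam"
definition Q1c :: "nat \<Rightarrow> (nat \<Rightarrow> complex) \<Rightarrow> complex \<Rightarrow> complex" where
  "Q1c m a z = of_nat m * z^(m-1) + P1 m a z"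
definition Q2c :: "nat \<Rightarrow> (nat \<Rightarrow> complex) \<Rightarrow> complex \<Rightarrow> complex" where
  "Q2c m a z = of_nat m * (of_nat (m-1) * z^(m-1-1)) + P2 m a z"
definition Gc :: "nat \<Rightarrow> (nat \<Rightarrow> complex) \<Rightarrow> complex \<Rightarrow> complex \<Rightarrow> complex" where
  "Gc m a lam z = Q1c m a z / (8 * Qc m a lam z powr (3/2))"
definition Hc :: "nat \<Rightarrow> (nat \<Rightarrow> complex) \<Rightarrow> complex \<Rightarrow> complex \<Rightarrow> complex" where
  "Hc m a lam z = Q1c m a z / (4 * Qc m a lam z)"
definition Gd :: "nat \<Rightarrow> (nat \<Rightarrow> complex) \<Rightarrow> complex \<Rightarrow> complex \<Rightarrow> complex" where
  "Gd m a lam z = (Q2c m a z * (8 * Qc m a lam z powr (3/2))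
       - (8 * ((3/2) * Qc m a lam z powr (3/2 - 1) * Q1c m a z)) * Q1c m a z)
       / (8 * Qc m a lam z powr (3/2)) ^ Suc (Suc 0)"

lemma DP: "(Ppoly m a has_field_derivative P1 m a z) (at z)"
  unfolding Ppoly_def[abs_def] P1_def
  by (auto intro!: derivative_eq_intros sum.cong simp: ac_simps)

lemma DP1: "(P1 m a has_field_derivative P2 m a z) (at z)"
  unfolding P1_def[abs_def] P2_def
  by (auto intro!: derivative_eq_intros sum.cong simp: ac_simps)

lemma DQ: "(Qc m a lam has_field_derivative Q1c m a z) (at z)"
  unfolding Qc_def[abs_def] Q1c_def
  by (auto intro!: derivative_eq_intros DP)

lemma DQ1: "(Q1c m a has_field_derivative Q2c m a z) (at z)"
  unfolding Q1c_def[abs_def] Q2c_def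
  by (auto intro!: derivative_eq_intros DP1)

lemma Qf_eq: "Qf m a lam = (\<lambda>x. Qc m a lam (of_real x))"
  by (auto simp: Qf_def Qc_def)

lemma vdQ: "vector_derivative (Qf m a lam) (at x) = Q1c m a (of_real x)"
  unfolding Qf_eq
  by (rule vector_derivative_at, rule has_vector_derivative_real_field, rule DQ)

lemma gf_eq: "gf m a lam = (\<lambda>x. Gc m a lam (of_real x))"
  by (rule ext) (simp add: gf_def Gc_def vdQ, simp add: Qf_def Qc_def)

lemma hf_eq: "hf m a lam = (\<lambda>x. Hc m a lam (of_real x))"
  by (rule ext) (simp add: hf_def Hc_def vdQ, simp add: Qf_def Qc_def)

lemma DG:
  assumes "Qc m a lam z \<notin> \<real>\<^sub>\<le>\<^sub>0"
  shows "(Gc m a lam has_field_derivative Gd m a lam z) (at z)"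
proof -
  have nz: "Qc m a lam z \<noteq> 0" using assms by auto
  have D1: "((\<lambda>z. Qc m a lam z powr (3/2)) has_field_derivative
        (3/2) * Qc m a lam z powr (3/2 - 1) * Q1c m a z) (at z)"
    by (rule DERIV_chain2[OF has_field_derivative_powr[OF assms] DQ])
  show ?thesis
    unfolding Gc_def[abs_def] Gd_def
    by (rule DERIV_quotient[OF DQ1 DERIV_cmult[OF D1]]) (use nz in simp)
qed

lemma vdG:
  assumes "Qc m a lam (of_real x) \<notin> \<real>\<^sub>\<le>\<^sub>0"
  shows "vector_derivative (gf m a lam) (at x) = Gd m a lam (of_real x)"
  unfolding gf_eq
  by (rule vector_derivative_at, rule has_vector_derivative_real_field, rule DG[OF assms])

lemma contQ: "isCont (Qc m a lam) z" "isCont (Q1c m a) z" "isCont (Q2c m a) z"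
  by (auto intro: DERIV_isCont DQ DQ1 simp: Q2c_def[abs_def] P2_def[abs_def] intro!: continuous_intros)

lemma contGH:
  assumes "Qc m a lam z \<notin> \<real>\<^sub>\<le>\<^sub>0"
  shows "isCont (Gc m a lam) z" "isCont (Hc m a lam) z" "isCont (Gd m a lam) z"
proof -
  have nz: "Qc m a lam z \<noteq> 0" using assms by auto
  show "isCont (Gc m a lam) z" by (rule DERIV_isCont[OF DG[OF assms]])
  show "isCont (Hc m a lam) z" unfolding Hc_def[abs_def]
    using nz by (auto intro!: continuous_intros contQ)
  show "isCont (Gd m a lam) z" unfolding Gd_def[abs_def]
    using nz assms by (auto intro!: continuous_intros contQ)
qed

lemma geom:
  fixes lam :: complex and t \<delta> :: real
  assumes "t \<ge> 0" "0 < \<delta>" "\<delta> \<le> pi" "\<bar>Arg lam\<bar> \<le> pi - \<delta>"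
  shows "norm (of_real t + lam) \<ge> sqrt ((1 - cos \<delta>)/2) * (t + norm lam)"
proof (cases "lam = 0")
  case True
  have "sqrt ((1 - cos \<delta>)/2) \<le> 1"
    by (simp add: real_sqrt_le_1_iff)
  then show ?thesis using True assms(1) by (simp add: mult_left_le_one_le)
next
  case False
  define L where "L = norm lam"
  define \<theta> where "\<theta> = Arg lam"
  have ReL: "Re lam = L * cos \<theta>" using cos_Arg[OF False] False by (simp add: L_def \<theta>_def)
  have "cos \<theta> = cos \<bar>\<theta>\<bar>" by (simp add: abs_real_def)
  also have "cos \<bar>\<theta>\<bar> \<ge> cos (pi - \<delta>)"
    by (rule cos_monotone_0_pi_le) (use assms in \<open>auto simp: \<theta>_def\<close>)
  finally have ct: "cos \<theta> \<ge> - cos \<delta>" by simp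
  have L0: "L \<ge> 0" by (simp add: L_def)
  have n2: "(norm (of_real t + lam))^2 = t^2 + 2*t*Re lam + L^2"
    unfolding L_def cmod_power2 by (simp add: power2_eq_square algebra_simps)
  also have "\<dots> \<ge> t^2 + L^2 - 2*t*L*cos \<delta>"
  proof -
    have "2*t*L*cos \<theta> \<ge> 2*t*L*(- cos \<delta>)"
      by (rule mult_left_mono[OF ct]) (use L0 assms(1) in simp)
    then show ?thesis using ReL by (simp add: algebra_simps)
  qed
  finally have A: "(norm (of_real t + lam))^2 \<ge> t^2 + L^2 - 2*t*L*cos \<delta>" .
  have B: "t^2 + L^2 - 2*t*L*cos \<delta> - (1 - cos \<delta>)/2 * (t+L)^2 = (1 + cos \<delta>)/2 * (t - L)^2"
    by (simp add: power2_eq_square field_simps)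
  have "1 + cos \<delta> \<ge> 0" using cos_ge_minus_one[of \<delta>] by linarith
  then have D: "(1 + cos \<delta>)/2 * (t - L)^2 \<ge> 0" by simp
  have S: "(sqrt ((1 - cos \<delta>)/2))^2 = (1 - cos \<delta>)/2" using cos_le_one[of \<delta>] by simp
  have C: "(sqrt ((1 - cos \<delta>)/2) * (t + L))^2 \<le> (norm (of_real t + lam))^2"
    unfolding power_mult_distrib S using A B D by linarith
  show ?thesis unfolding L_def[symmetric]
    by (rule power2_le_imp_le[OF C]) simp
qed

lemma powle: "0 \<le> x \<Longrightarrow> x \<le> E \<Longrightarrow> 1 \<le> E \<Longrightarrow> k \<le> n \<Longrightarrow> (x::real)^k \<le> E^n"
  by (meson order.trans power_increasing power_mono)

lemma sumbound:
  fixes x E A :: real and a f :: "nat \<Rightarrow> complex"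
  assumes x: "0 \<le> x" "x \<le> E" "1 \<le> E" and A: "(\<Sum>i=1..m. norm (a i)) \<le> A"
    and f: "\<And>i. i \<in> {1..m} \<Longrightarrow> norm (f i) \<le> c * x^(k i)" "\<And>i. i \<in> {1..m} \<Longrightarrow> k i \<le> n"
    and c: "c \<ge> 0"
  shows "norm (\<Sum>i=1..m. a i * f i) \<le> A * (c * E^n)"
proof -
  have "norm (\<Sum>i=1..m. a i * f i) \<le> (\<Sum>i=1..m. norm (a i) * (c * E^n))"
  proof (rule order.trans[OF norm_sum sum_mono])
    fix i assume i: "i \<in> {1..m}"
    have "x^(k i) \<le> E^n" using powle[OF x f(2)[OF i]] .
    then have "norm (f i) \<le> c * E^n" using f(1)[OF i] c by (meson mult_left_mono order.trans)
    then show "norm (a i * f i) \<le> norm (a i) * (c * E^n)"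
      unfolding norm_mult by (rule mult_left_mono) auto
  qed
  also have "\<dots> = (\<Sum>i=1..m. norm (a i)) * (c * E^n)" by (simp add: sum_distrib_right)
  also have "\<dots> \<le> A * (c * E^n)"
    by (rule mult_right_mono[OF A]) (use c x in simp)
  finally show ?thesis .
qed

lemma Pbounds:
  fixes x E A :: real
  assumes x: "0 \<le> x" "x \<le> E" "1 \<le> E" and A: "(\<Sum>i=1..m. norm (a i)) \<le> A"
    and m: "m \<ge> 3"
  shows "norm (Ppoly m a (of_real x)) \<le> A * E^(m-1)"
    "norm (Q1c m a (of_real x)) \<le> real m * (1+A) * E^(m-1)"
    "norm (Q2c m a (of_real x)) \<le> real m * real m * (1+A) * E^(m-2)"
proof -
  have "0 \<le> (\<Sum>i=1..m. norm (a i))" by (simp add: sum_nonneg)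
  then have A0: "A \<ge> 0" using A by linarith
  have "norm (Ppoly m a (of_real x)) \<le> A * (1 * E^(m-1))"
    unfolding Ppoly_def
    by (rule sumbound[OF x A, where k="\<lambda>i. m-i"]) (use x in \<open>auto simp: norm_power\<close>)
  then show "norm (Ppoly m a (of_real x)) \<le> A * E^(m-1)" by simp
  have p1: "norm (P1 m a (of_real x)) \<le> A * (m * E^(m-1))"
    unfolding P1_def
  proof (rule sumbound[OF x A, where k="\<lambda>i. m-i-1"])
    fix i assume "i \<in> {1..m}"
    have "real (m - i) \<le> m" by simp
    then show "norm (of_nat (m - i) * complex_of_real x ^ (m - i - 1)) \<le> real m * x ^ (m - i - 1)"
      by (simp add: norm_mult norm_power mult_right_mono x(1))
  qed auto
  have "norm (Q1c m a (of_real x)) \<le> m * E^(m-1) + A * (m * E^(m-1))"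
    unfolding Q1c_def
  proof (rule order.trans[OF norm_triangle_ineq add_mono[OF _ p1]])
    have "x^(m-1) \<le> E^(m-1)" by (rule powle[OF x]) simp
    then show "norm (of_nat m * complex_of_real x ^ (m - 1)) \<le> m * E^(m-1)"
      by (simp add: norm_mult norm_power x(1) mult_left_mono)
  qed
  then show "norm (Q1c m a (of_real x)) \<le> real m * (1+A) * E^(m-1)" by (simp add: algebra_simps)
  have p2: "norm (P2 m a (of_real x)) \<le> A * ((m*m) * E^(m-2))"
    unfolding P2_def
  proof (rule sumbound[OF x A, where k="\<lambda>i. m-i-1-1"])
    fix i assume "i \<in> {1..m}"
    have "(m - i) * (m - i - 1) \<le> m * m" by (intro mult_le_mono) auto
    then have "real ((m - i) * (m - i - 1)) \<le> real (m * m)" by (simp only: of_nat_le_iff)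
    then have "real (m - i) * real (m - i - 1) \<le> real (m * m)" by simp
    then show "norm (of_nat (m - i) * (of_nat (m - i - 1) * complex_of_real x ^ (m - i - 1 - 1)))
         \<le> real (m*m) * x ^ (m - i - 1 - 1)"
      by (simp add: norm_mult norm_power mult_right_mono x(1) mult.assoc[symmetric])
  qed auto
  have "norm (Q2c m a (of_real x)) \<le> (m*m) * E^(m-2) + A * ((m*m) * E^(m-2))"
    unfolding Q2c_def
  proof (rule order.trans[OF norm_triangle_ineq add_mono[OF _ p2]])
    have "x^(m-2) \<le> E^(m-2)" by (rule powle[OF x]) simp
    moreover have "real (m-1) \<le> m" by simp
    ultimately have "real m * (real (m-1) * x^(m-2)) \<le> m * (m * E^(m-2))"
      by (intro mult_left_mono mult_mono) (use x in auto)
    then show "norm (of_nat m * (of_nat (m - 1) * complex_of_real x ^ (m - 1 - 1))) \<le> (m*m) * E^(m-2)"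
      by (simp add: norm_mult norm_power x(1) mult.assoc numeral_2_eq_2)
  qed
  then have "norm (Q2c m a (of_real x)) \<le> real m * real m * (1+A) * E^(m-2)" by (simp add: algebra_simps)
  then show "norm (Q2c m a (of_real x)) \<le> real m * real m * (1+A) * E^(m-2)" by simp
qed

lemma realalg:
  fixes n1 n2 q E e2 c B1 B2 :: real
  assumes c: "c > 0" and E: "E \<ge> 1" and e2: "e2 > 0" and n1: "0 \<le> n1" "n1 \<le> B1*E*e2"
    and n2: "0 \<le> n2" "n2 \<le> B2*e2" and q: "q \<ge> c*E^2*e2"
  shows "n1/(8*q* sqrt q) \<le> B1/(8*c* sqrt c) / (E* sqrt(E^2*e2))"
    "n1/(4*q) * (n1/(8*q* sqrt q)) \<le> B1^2/(32*c^2* sqrt c) / (E^2* sqrt(E^2*e2))"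
    "n2/(8*q* sqrt q) + 3*n1^2/(16*q^2* sqrt q)
       \<le> (B2/(8*c* sqrt c) + 3*B1^2/(16*c^2* sqrt c)) / (E^2* sqrt(E^2*e2))"
proof -
  define sW where "sW = sqrt(E^2*e2)"
  have E0: "E > 0" using E by simp
  have sW0: "sW > 0" unfolding sW_def using E0 e2 by simp
  have cq: "c*E^2*e2 > 0" using c E0 e2 by simp
  have q0: "q > 0" using cq q by simp
  have sq: "sqrt q \<ge> sqrt c * sW"
    unfolding sW_def real_sqrt_mult[symmetric] using q by (simp add: mult.assoc)
  have sc: "sqrt c > 0" using c by simp
  have B1: "B1 \<ge> 0"
  proof (rule ccontr)
    assume "\<not> B1 \<ge> 0"
    then have "B1 * (E*e2) < 0" using E0 e2 by (simp add: mult_neg_pos)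
    then show False using n1 by (simp add: mult.assoc)
  qed
  have B2: "B2 \<ge> 0"
  proof (rule ccontr)
    assume "\<not> B2 \<ge> 0"
    then have "B2 * e2 < 0" using e2 by (simp add: mult_neg_pos)
    then show False using n2 by simp
  qed
  have qsq: "q * sqrt q \<ge> (c*E^2*e2) * (sqrt c * sW)"
    by (rule mult_mono[OF q sq]) (use q0 sc sW0 in auto)
  have q2sq: "q^2 * sqrt q \<ge> (c*E^2*e2)^2 * (sqrt c * sW)"
    by (rule mult_mono[OF power_mono[OF q] sq]) (use q0 cq sc sW0 in auto)
  have P1: "0 < (c*E^2*e2) * (sqrt c * sW)" using cq sc sW0 by simp
  have P2: "0 < (c*E^2*e2)^2 * (sqrt c * sW)" using cq sc sW0 E0 e2 by (intro mult_pos_pos zero_less_power) auto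
  have "n1/(8*q* sqrt q) \<le> (B1*E*e2)/(8*((c*E^2*e2) * (sqrt c * sW)))"
    by (rule frac_le) (use n1 qsq P1 in auto)
  also have "\<dots> = B1/(8*c* sqrt c) / (E* sW)"
    using E0 e2 c sc sW0 by (simp add: field_simps power2_eq_square)
  finally show "n1/(8*q* sqrt q) \<le> B1/(8*c* sqrt c) / (E* sqrt(E^2*e2))" unfolding sW_def .
  have "n1/(4*q) * (n1/(8*q* sqrt q)) = n1^2/(32*(q^2* sqrt q))"
    using q0 by (simp add: field_simps power2_eq_square)
  also have "\<dots> \<le> (B1*E*e2)^2/(32*((c*E^2*e2)^2 * (sqrt c * sW)))"
    by (rule frac_le) (use n1 q2sq P2 in \<open>auto intro: power_mono\<close>)
  also have "\<dots> = B1^2/(32*c^2* sqrt c) / (E^2* sW)"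
    using E0 e2 c sc sW0 by (simp add: field_simps power2_eq_square)
  finally show "n1/(4*q) * (n1/(8*q* sqrt q)) \<le> B1^2/(32*c^2* sqrt c) / (E^2* sqrt(E^2*e2))"
    unfolding sW_def .
  have "n2/(8*q* sqrt q) \<le> (B2*e2)/(8*((c*E^2*e2) * (sqrt c * sW)))"
    by (rule frac_le) (use n2 qsq P1 in auto)
  also have "\<dots> = B2/(8*c* sqrt c) / (E^2* sW)"
    using E0 e2 c sc sW0 by (simp add: field_simps power2_eq_square)
  finally have X: "n2/(8*q* sqrt q) \<le> B2/(8*c* sqrt c) / (E^2* sW)" .
  have "3*n1^2/(16*q^2* sqrt q) \<le> 3*(B1*E*e2)^2/(16*((c*E^2*e2)^2 * (sqrt c * sW)))"
    by (rule frac_le) (use n1 q2sq P2 in \<open>auto intro: power_mono\<close>)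
  also have "\<dots> = 3*B1^2/(16*c^2* sqrt c) / (E^2* sW)"
    using E0 e2 c sc sW0 by (simp add: field_simps power2_eq_square)
  finally have Y: "3*n1^2/(16*q^2* sqrt q) \<le> 3*B1^2/(16*c^2* sqrt c) / (E^2* sW)" .
  show "n2/(8*q* sqrt q) + 3*n1^2/(16*q^2* sqrt q)
       \<le> (B2/(8*c* sqrt c) + 3*B1^2/(16*c^2* sqrt c)) / (E^2* sqrt(E^2*e2))"
    using add_mono[OF X Y] unfolding sW_def by (simp add: add_divide_distrib)
qed

lemma Qlow:
  fixes x \<delta> c0 :: real
  assumes x: "x \<ge> 0" and \<delta>: "0 < \<delta>" "\<delta> \<le> pi" and Arg: "\<bar>Arg lam\<bar> \<le> pi - \<delta>"
    and c0: "c0 = sqrt ((1 - cos \<delta>)/2)" and L: "norm lam \<ge> 1"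
    and P: "norm (Ppoly m a (of_real x)) \<le> c0/2 * (x^m + norm lam)"
  shows "norm (Qc m a lam (of_real x)) \<ge> c0/2 * (x^m + norm lam)"
    "Qc m a lam (of_real x) \<notin> \<real>\<^sub>\<le>\<^sub>0"
proof -
  have cd: "cos \<delta> < 1" using cos_monotone_0_pi[of 0 \<delta>] \<delta> by simp
  have c0p: "c0 > 0" unfolding c0 using cd by simp
  have "x^m \<ge> 0" using x by simp
  then have W: "x^m + norm lam > 0" using L by linarith
  have Qe: "Qc m a lam (of_real x) = (of_real (x^m) + lam) + Ppoly m a (of_real x)"
    by (simp add: Qc_def)
  have g: "norm (of_real (x^m) + lam) \<ge> c0 * (x^m + norm lam)"
    unfolding c0 by (rule geom) (use x \<delta> Arg in auto)
  have "norm (Qc m a lam (of_real x)) \<ge> norm (of_real (x^m) + lam) - norm (Ppoly m a (of_real x))"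
    unfolding Qe by (metis norm_diff_ineq diff_minus_eq_add norm_minus_cancel)
  then show "norm (Qc m a lam (of_real x)) \<ge> c0/2 * (x^m + norm lam)" using g P by simp
  show "Qc m a lam (of_real x) \<notin> \<real>\<^sub>\<le>\<^sub>0"
  proof
    assume "Qc m a lam (of_real x) \<in> \<real>\<^sub>\<le>\<^sub>0"
    then obtain r where r: "r \<le> 0" "Qc m a lam (of_real x) = of_real r"
      by (metis complex_nonpos_Reals_iff complex_is_Real_iff of_real_Re Reals_def)
    have "norm (of_real (x^m - r) + lam) \<ge> c0 * ((x^m - r) + norm lam)"
      unfolding c0 by (rule geom) (use x \<delta> Arg r in \<open>auto intro: order.trans[OF _ zero_le_power]\<close>)
    moreover have "of_real (x^m - r) + lam = - Ppoly m a (of_real x)"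
      using r(2) unfolding Qe by (simp add: algebra_simps)
    ultimately have "norm (Ppoly m a (of_real x)) \<ge> c0 * ((x^m - r) + norm lam)" by simp
    moreover have "c0 * ((x^m - r) + norm lam) \<ge> c0 * (x^m + norm lam)"
      using c0p r by (intro mult_left_mono) auto
    moreover have "c0 * (x^m + norm lam) > 0" using c0p W by simp
    ultimately show False using P by linarith
  qed
qed

lemma sbound:
  fixes g h g' :: complex
  assumes g: "norm g \<le> 1/2" and X: "norm h * norm g \<le> X" and Y: "norm g' \<le> Y"
    and N: "N \<in> {h*g - g'*g, - h*g^2 + g', - h*g^2 - g', - h*g - g'*g}"
  shows "norm (N / (1 + g^2)) \<le> 2*(X+Y)"
proof -
  have "(norm g)^2 \<le> (1/2)^2" by (rule power_mono[OF g]) simp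
  then have ng: "norm (g^2) \<le> 1/4" by (simp add: norm_power norm_mult power2_eq_square)
  have d: "norm (1 + g^2) \<ge> 3/4"
    using norm_diff_ineq[of "1::complex" "g\<^sup>2"] ng by simp
  have X0: "X \<ge> 0" using X by (meson order.trans mult_nonneg_nonneg norm_ge_zero)
  have Y0: "Y \<ge> 0" using Y norm_ge_zero order.trans by blast
  have hg: "norm h * norm g * norm g \<le> norm h * norm g"
    using g by (intro mult_left_le) auto
  have gg: "norm g' * norm g \<le> norm g'"
    using g by (intro mult_left_le) auto
  have "norm N \<le> norm h * norm g + norm g'"
    using N
  proof (elim insertE emptyE)
    assume "N = h*g - g'*g"
    then show ?thesis using gg norm_triangle_ineq4[of "h*g" "g'*g"] by (simp add: norm_mult)
  next
    assume "N = - h*g^2 + g'"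
    then show ?thesis using hg norm_triangle_ineq[of "- h*g^2" "g'"]
      by (simp add: norm_mult norm_power power2_eq_square mult.assoc)
  next
    assume "N = - h*g^2 - g'"
    then show ?thesis using hg norm_triangle_ineq4[of "- h*g^2" "g'"]
      by (simp add: norm_mult norm_power power2_eq_square mult.assoc)
  next
    assume "N = - h*g - g'*g"
    then show ?thesis using gg norm_triangle_ineq4[of "- h*g" "g'*g"] by (simp add: norm_mult)
  qed
  then have nN: "norm N \<le> X + Y" using X Y by simp
  have "norm (N / (1 + g^2)) = norm N / norm (1 + g^2)" by (simp add: norm_divide)
  also have "\<dots> \<le> (X+Y) / (3/4)"
    by (rule frac_le) (use nN d X Y0 X0 in auto)
  also have "\<dots> \<le> 2*(X+Y)" using nN X0 Y0 by simp
  finally show ?thesis .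
qed

lemma normpow:
  fixes Q :: complex assumes "Q \<noteq> 0"
  shows "norm (Q powr (3/2)) = norm Q * sqrt (norm Q)"
    "norm (Q powr (3/2 - 1)) = sqrt (norm Q)"
proof -
  have "norm (Q powr (3/2)) = norm Q powr (3/2)"
    by (subst norm_powr_real_powr') auto
  also have "\<dots> = norm Q powr (1 + 1/2)" by simp
  also have "\<dots> = norm Q powr 1 * norm Q powr (1/2)" by (rule powr_add)
  also have "\<dots> = norm Q * sqrt (norm Q)"
    using assms powr_half_sqrt[of "norm Q"] by simp
  finally show "norm (Q powr (3/2)) = norm Q * sqrt (norm Q)" .
  have "norm (Q powr (3/2 - 1)) = norm Q powr (1/2)"
    by (subst norm_powr_real_powr') auto
  then show "norm (Q powr (3/2 - 1)) = sqrt (norm Q)" using powr_half_sqrt[of "norm Q"] by simp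
qed

definition Sc :: "nat \<Rightarrow> (nat \<Rightarrow> complex) \<Rightarrow> complex \<Rightarrow> nat \<Rightarrow> nat \<Rightarrow> complex \<Rightarrow> complex" where
  "Sc m a lam j k z =
    (let g = Gc m a lam z; h = Hc m a lam z; g' = Gd m a lam z in
     (if j = 1 \<and> k = 1 then h*g - g'*g
      else if j = 1 \<and> k = 2 then - h*g^2 + g'
      else if j = 2 \<and> k = 1 then - h*g^2 - g'
      else - h*g - g'*g) / (1 + g^2))"

lemma sf_eq:
  assumes "Qc m a lam (of_real x) \<notin> \<real>\<^sub>\<le>\<^sub>0"
  shows "sf m a j k lam x = Sc m a lam j k (of_real x)"
  unfolding sf_def vdG[OF assms] by (simp add: gf_eq hf_eq Sc_def)

lemma pointwise:
  fixes m :: nat and \<delta> A c0 c B1 B2 x :: real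
  assumes m: "m \<ge> 3" and \<delta>: "0 < \<delta>" "\<delta> \<le> pi" and A: "(\<Sum>i=1..m. norm (a i)) \<le> A"
    and Arg: "\<bar>Arg lam\<bar> \<le> pi - \<delta>" and L1: "norm lam \<ge> 1"
    and c0: "c0 = sqrt ((1 - cos \<delta>)/2)" and c: "c = c0/2"
    and B1: "B1 = real m * (1+A)" and B2: "B2 = real m * real m * (1+A)"
    and LA: "norm lam \<ge> (2*A/c0)^m" and Lg: "sqrt (norm lam) \<ge> B1/(4*c* sqrt c)"
    and x: "x \<ge> 0"
  shows "Qc m a lam (of_real x) \<notin> \<real>\<^sub>\<le>\<^sub>0"
    "norm (Gc m a lam (of_real x)) \<le> 1/2"
    "\<And>j k. j \<in> {1,2} \<Longrightarrow> k \<in> {1,2} \<Longrightarrow> norm (sf m a j k lam x) \<le>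
       2*(B1^2/(32*c^2* sqrt c) + (B2/(8*c* sqrt c) + 3*B1^2/(16*c^2* sqrt c)))
        / (((x^m + norm lam) powr (1/m))^2 * sqrt (x^m + norm lam))"
proof -
  define L where "L = norm lam"
  define W where "W = x^m + L"
  define E where "E = W powr (1/m)"
  define e2 where "e2 = E^(m-2)"
  have cd: "cos \<delta> < 1" using cos_monotone_0_pi[of 0 \<delta>] \<delta> by simp
  have c0p: "c0 > 0" unfolding c0 using cd by simp
  have cp: "c > 0" using c0p c by simp
  have "0 \<le> (\<Sum>i=1..m. norm (a i))" by (simp add: sum_nonneg)
  then have A0: "A \<ge> 0" using A by linarith
  have "x^m \<ge> 0" using x by simp
  then have W1: "W \<ge> 1" unfolding W_def L_def using L1 by linarith
  have WL: "W \<ge> L" unfolding W_def using x by simp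
  have E1: "E \<ge> 1" unfolding E_def using W1 by (simp add: ge_one_powr_ge_zero)
  have m0: "m > 0" using m by simp
  have EmW: "E^m = W"
  proof -
    have "E^m = E powr (real m)" using E1 by (simp add: powr_realpow)
    also have "\<dots> = W" unfolding E_def using W1 m0 by (simp add: powr_powr)
    finally show ?thesis .
  qed
  have "x^m \<le> E^m" using EmW W_def L_def by simp
  then have xE: "x \<le> E" using power_mono_iff[of x E m] x E1 m0 by simp
  have e2p: "e2 > 0" unfolding e2_def using E1 by simp
  have "m - 1 = Suc (m-2)" using m by simp
  then have Em1: "E^(m-1) = E*e2" unfolding e2_def by simp
  have "m = 2 + (m-2)" using m by simp
  then have Em: "E^m = E^2*e2" unfolding e2_def by (metis power_add)
  note PB = Pbounds[OF x xE E1 A m]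
  have "(2*A/c0)^m \<le> E^m" using EmW WL LA L_def by simp
  then have EA: "E \<ge> 2*A/c0" using power_mono_iff[of "2*A/c0" E m] A0 c0p E1 m0 by simp
  have "A * E^(m-1) \<le> (c0/2 * E) * E^(m-1)"
    by (rule mult_right_mono) (use EA c0p E1 in \<open>auto simp: field_simps\<close>)
  also have "\<dots> = c0/2 * E^m" using m0 by (simp add: power_eq_if)
  finally have PW: "norm (Ppoly m a (of_real x)) \<le> c0/2 * (x^m + norm lam)"
    using PB(1) EmW W_def L_def by simp
  note QL = Qlow[OF x \<delta> Arg c0 L1 PW]
  show nr: "Qc m a lam (of_real x) \<notin> \<real>\<^sub>\<le>\<^sub>0" by (rule QL(2))
  define Q where "Q = Qc m a lam (of_real x)"
  define q where "q = norm Q"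
  have "c*E^2*e2 = c0/2*(x^m + norm lam)" using Em EmW W_def L_def c by (simp add: mult.assoc)
  then have qW: "q \<ge> c*E^2*e2" unfolding q_def Q_def using QL(1) by linarith
  have Q0: "Q \<noteq> 0" unfolding Q_def using nr by auto
  note NP = normpow[OF Q0]
  define n1 where "n1 = norm (Q1c m a (of_real x))"
  define n2 where "n2 = norm (Q2c m a (of_real x))"
  have n1b: "n1 \<le> B1*E*e2" unfolding n1_def B1 using PB(2) Em1 by (simp add: mult.assoc)
  have n2b: "n2 \<le> B2*e2" unfolding n2_def B2 e2_def using PB(3) by simp
  note RA = realalg[OF cp E1 e2p _ n1b _ n2b qW, unfolded Em[symmetric] EmW, simplified n1_def n2_def]
  have ngeq: "norm (Gc m a lam (of_real x)) = n1/(8*q* sqrt q)"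
    unfolding Gc_def n1_def q_def Q_def[symmetric] by (simp add: norm_divide norm_mult NP)
  have nheq: "norm (Hc m a lam (of_real x)) = n1/(4*q)"
    unfolding Hc_def n1_def q_def Q_def[symmetric] by (simp add: norm_divide norm_mult)
  have sqL: "E * sqrt W \<ge> sqrt L"
  proof -
    have "sqrt L \<le> sqrt W" using WL by simp
    also have "\<dots> \<le> E * sqrt W" using E1 W1 by (simp add: mult_le_cancel_right1)
    finally show ?thesis .
  qed
  have "norm (Gc m a lam (of_real x)) \<le> B1/(8*c* sqrt c) / (E* sqrt W)"
    using RA(1) ngeq by (simp add: n1_def)
  also have "\<dots> \<le> B1/(8*c* sqrt c) / sqrt L"
    by (rule divide_left_mono[OF sqL]) (use B1 A0 cp L1 L_def E1 W1 in \<open>auto intro!: mult_pos_pos\<close>)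
  also have "\<dots> \<le> 1/2"
  proof -
    have P: "0 < 4*c* sqrt c" using cp by simp
    have P2: "0 < sqrt L" using L1 L_def by auto
    have "B1 \<le> (4*c* sqrt c) * sqrt L" using Lg P unfolding L_def by (simp add: pos_divide_le_eq mult.commute)
    then have "B1/(4*c* sqrt c) / sqrt L \<le> 1" using P P2 by (simp add: pos_divide_le_eq mult.commute)
    moreover have "B1/(8*c* sqrt c) / sqrt L = (B1/(4*c* sqrt c) / sqrt L)/2" by simp
    ultimately show ?thesis by (simp add: ac_simps)
  qed
  finally show ng: "norm (Gc m a lam (of_real x)) \<le> 1/2" .
  fix j k :: nat assume jk: "j \<in> {1,2}" "k \<in> {1,2}"
  have sq0: "sqrt q > 0" using Q0 unfolding q_def by simp
  have q0: "q > 0" using Q0 unfolding q_def by simp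
  have NP2: "norm (Q powr (1/2)) = sqrt (norm Q)" using NP(2) by simp
  have D: "norm ((8 * Q powr (3/2)) ^ Suc (Suc 0)) = (8*q * sqrt q)^2"
    by (simp add: norm_power norm_mult NP q_def power2_eq_square)
  have "norm (Gd m a lam (of_real x)) \<le> (n2 * (8*q * sqrt q) + 8*((3/2) * sqrt q*n1)*n1) / (8*q * sqrt q)^2"
    unfolding Gd_def Q_def[symmetric] norm_divide D
    by (rule divide_right_mono[OF order.trans[OF norm_triangle_ineq4]])
       (simp_all add: norm_mult NP NP2 q_def n1_def n2_def)
  also have "\<dots> = n2/(8*q* sqrt q) + 3*n1^2/(16*q^2* sqrt q)"
  proof -
    have "sqrt q * sqrt q = q" using q0 by simp
    then show ?thesis using q0 sq0 by (simp add: field_simps power2_eq_square)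
  qed
  finally have gdb: "norm (Gd m a lam (of_real x)) \<le> n2/(8*q* sqrt q) + 3*n1^2/(16*q^2* sqrt q)" .
  have hgb: "norm (Hc m a lam (of_real x)) * norm (Gc m a lam (of_real x)) \<le> n1/(4*q) * (n1/(8*q* sqrt q))"
    using nheq ngeq by simp
  have N: "(if j = 1 \<and> k = 1 then Hc m a lam (of_real x)*Gc m a lam (of_real x) - Gd m a lam (of_real x)*Gc m a lam (of_real x)
      else if j = 1 \<and> k = 2 then - Hc m a lam (of_real x)*Gc m a lam (of_real x)^2 + Gd m a lam (of_real x)
      else if j = 2 \<and> k = 1 then - Hc m a lam (of_real x)*Gc m a lam (of_real x)^2 - Gd m a lam (of_real x)
      else - Hc m a lam (of_real x)*Gc m a lam (of_real x) - Gd m a lam (of_real x)*Gc m a lam (of_real x))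
     \<in> {Hc m a lam (of_real x)*Gc m a lam (of_real x) - Gd m a lam (of_real x)*Gc m a lam (of_real x),
         - Hc m a lam (of_real x)*Gc m a lam (of_real x)^2 + Gd m a lam (of_real x),
         - Hc m a lam (of_real x)*Gc m a lam (of_real x)^2 - Gd m a lam (of_real x),
         - Hc m a lam (of_real x)*Gc m a lam (of_real x) - Gd m a lam (of_real x)*Gc m a lam (of_real x)}"
    by auto
  have "norm (sf m a j k lam x) \<le> 2*(B1^2/(32*c^2* sqrt c) / (E^2 * sqrt W)
        + (B2/(8*c* sqrt c) + 3*B1^2/(16*c^2* sqrt c)) / (E^2 * sqrt W))"
    unfolding sf_eq[OF nr] Sc_def Let_def
    by (rule sbound[OF ng order.trans[OF hgb] order.trans[OF gdb] N])
       (use RA in \<open>simp_all add: n1_def n2_def\<close>)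
  then show "norm (sf m a j k lam x) \<le>
       2*(B1^2/(32*c^2* sqrt c) + (B2/(8*c* sqrt c) + 3*B1^2/(16*c^2* sqrt c)))
        / (((x^m + norm lam) powr (1/m))^2 * sqrt (x^m + norm lam))"
    unfolding E_def[symmetric] W_def[symmetric] L_def[symmetric] E_def[symmetric]
    by (simp only: add_divide_distrib[symmetric] times_divide_eq_right)
qed

lemma isCont_if_const: "isCont f x \<Longrightarrow> isCont g x \<Longrightarrow> isCont (\<lambda>y. if P then f y else g y) x"
  by (cases P) auto

lemma fixed:
  fixes m :: nat and \<delta> A c0 c B1 B2 D :: real
  assumes m: "m \<ge> 3" and \<delta>: "0 < \<delta>" "\<delta> \<le> pi" and A: "(\<Sum>i=1..m. norm (a i)) \<le> A"
    and Arg: "\<bar>Arg lam\<bar> \<le> pi - \<delta>" and L1: "norm lam \<ge> 1"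
    and c0: "c0 = sqrt ((1 - cos \<delta>)/2)" and c: "c = c0/2"
    and B1: "B1 = real m * (1+A)" and B2: "B2 = real m * real m * (1+A)"
    and LA: "norm lam \<ge> (2*A/c0)^m" and Lg: "sqrt (norm lam) \<ge> B1/(4*c * sqrt c)"
    and D: "D = 2*(B1^2/(32*c^2 * sqrt c) + (B2/(8*c * sqrt c) + 3*B1^2/(16*c^2 * sqrt c)))"
    and jk: "j \<in> {1,2}" "k \<in> {1,2}"
  shows "set_integrable lborel {0..} (\<lambda>x. norm (sf m a j k lam x)) \<and>
              (\<integral>x\<in>{0..}. norm (sf m a j k lam x) \<partial>lborel)
                \<le> (D*pi) * norm lam powr (- (1/2 + 1/real m))"
proof -
  note PW = pointwise[OF m \<delta> A Arg L1 c0 c B1 B2 LA Lg]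
  define L where "L = norm lam"
  define x0 where "x0 = L powr (1/m)"
  define K0 where "K0 = 2*D/sqrt L"
  have L0: "L > 0" using L1 L_def by auto
  have x00: "x0 > 0" using L0 x0_def by simp
  have m0: "m > 0" using m by simp
  have D0: "D \<ge> 0"
  proof -
    have "norm (sf m a j k lam 0) \<le> D / (((0^m + norm lam) powr (1/m))^2 * sqrt (0^m + norm lam))"
      using PW(3)[of 0 j k] jk D by simp
    moreover have "((0^m + norm lam) powr (1/m))^2 * sqrt (0^m + norm lam) > 0" using L1 L0 L_def m0 by (auto intro!: mult_pos_pos simp: power_0_left)
    ultimately have "0 \<le> D / (((0^m + norm lam) powr (1/m))^2 * sqrt (0^m + norm lam))"
      "((0^m + norm lam) powr (1/m))^2 * sqrt (0^m + norm lam) > 0"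
      using norm_ge_zero order.trans by blast+
    then show ?thesis by (simp add: zero_le_divide_iff)
  qed
  have bnd: "norm (sf m a j k lam x) \<le> K0 * (1/(x0^2+x^2))" if x: "x \<ge> 0" for x
  proof -
    define W where "W = x^m + L"
    define E where "E = W powr (1/m)"
    have WL: "W \<ge> L" using x W_def by simp
    have W0: "W > 0" using WL L0 by simp
    have Ex0: "E \<ge> x0" unfolding E_def x0_def by (rule powr_mono2) (use WL L0 in auto)
    have EmW: "E^m = W"
    proof -
      have "E^m = E powr (real m)" using W0 E_def by (simp add: powr_realpow)
      also have "\<dots> = W" unfolding E_def using W0 m0 by (simp add: powr_powr)
      finally show ?thesis .
    qed
    have E0: "E > 0" using W0 E_def by simp
    have "x^m \<le> E^m" using EmW W_def L0 by simp
    then have xE: "x \<le> E" using power_mono_iff[of x E m] x E0 m0 by simp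
    have "x0^2 \<le> E^2" using Ex0 x00 by (simp add: power_mono)
    moreover have "x^2 \<le> E^2" using xE x by (simp add: power_mono)
    ultimately have E2: "x0^2 + x^2 \<le> 2 * E^2" by simp
    have sW: "sqrt L \<le> sqrt W" using WL by simp
    have "(x0^2+x^2) * sqrt L \<le> (2*E^2) * sqrt W"
      by (rule mult_mono[OF E2 sW]) (use L0 in auto)
    then have P: "1/(E^2 * sqrt W) \<le> 2/((x0^2+x^2) * sqrt L)"
    proof -
      have "1/(E^2 * sqrt W) = 2/((2*E^2) * sqrt W)" by simp
      also have "\<dots> \<le> 2/((x0^2+x^2) * sqrt L)"
        by (rule frac_le) (use x00 L0 \<open>(x0^2+x^2) * sqrt L \<le> (2*E^2) * sqrt W\<close> in \<open>auto intro!: mult_pos_pos add_pos_nonneg\<close>)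
      finally show ?thesis .
    qed
    have "norm (sf m a j k lam x) \<le> D / (E^2 * sqrt W)"
      using PW(3)[OF x jk] D unfolding E_def W_def L_def by simp
    also have "\<dots> = D * (1/(E^2 * sqrt W))" by simp
    also have "\<dots> \<le> D * (2/((x0^2+x^2) * sqrt L))" by (rule mult_left_mono[OF P D0])
    also have "\<dots> = K0 * (1/(x0^2+x^2))" unfolding K0_def by (simp add: ac_simps)
    finally show ?thesis .
  qed
  have cont: "continuous_on {0..} (\<lambda>x. norm (sf m a j k lam x))"
  proof -
    have "continuous_on {0..} (\<lambda>x. norm (Sc m a lam j k (of_real x)))"
    proof (intro continuous_at_imp_continuous_on ballI)
      fix x :: real assume x: "x \<in> {0..}"
      then have x': "x \<ge> 0" by simp
      note nr = PW(1)[OF x']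
      have g: "1 + (Gc m a lam (of_real x))^2 \<noteq> 0"
      proof
        assume "1 + (Gc m a lam (of_real x))^2 = 0"
        then have "(Gc m a lam (of_real x))^2 = -1" by (simp add: add_eq_0_iff)
        then have "norm ((Gc m a lam (of_real x))^2) = 1" by simp
        then have "norm (Gc m a lam (of_real x)) = 1" using norm_ge_zero[of "Gc m a lam (of_real x)"] by (auto simp: norm_power power2_eq_1_iff)
        then show False using PW(2)[OF x'] by simp
      qed
      have co: "isCont (of_real :: real \<Rightarrow> complex) x" by (rule continuous_intros)+
      have c1: "isCont (\<lambda>y. Gc m a lam (of_real y)) x"
        by (rule isCont_o2[OF co contGH(1)[OF nr]])
      have c2: "isCont (\<lambda>y. Hc m a lam (of_real y)) x"
        by (rule isCont_o2[OF co contGH(2)[OF nr]])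
      have c3: "isCont (\<lambda>y. Gd m a lam (of_real y)) x"
        by (rule isCont_o2[OF co contGH(3)[OF nr]])
      show "isCont (\<lambda>x. norm (Sc m a lam j k (of_real x))) x"
        unfolding Sc_def Let_def
        using c1 c2 c3 g by (auto intro!: continuous_intros isCont_if_const)
    qed
    moreover have "\<And>x. x \<in> {0..} \<Longrightarrow> norm (sf m a j k lam x) = norm (Sc m a lam j k (of_real x))"
      using sf_eq PW(1) by simp
    ultimately show ?thesis by (metis (no_types, lifting) continuous_on_cong)
  qed
  have K00: "K0 \<ge> 0" using D0 L0 K0_def by simp
  note IB = intbound[OF x00]
  have IK: "set_integrable lborel {0..} (\<lambda>x. K0 * (1/(x0^2+x^2)))"
    by (rule set_integrable_mult_right) (rule IB(1))
  have INT: "set_integrable lborel {0..} (\<lambda>x. norm (sf m a j k lam x))"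
    unfolding set_integrable_def
  proof (rule Bochner_Integration.integrable_bound[OF IK[unfolded set_integrable_def]])
    show "(\<lambda>x. indicator {0..} x *\<^sub>R norm (sf m a j k lam x)) \<in> borel_measurable lborel"
      using borel_measurable_continuous_on_indicator[OF _ cont] by simp
    show "AE x in lborel. norm (indicator {0..} x *\<^sub>R norm (sf m a j k lam x))
        \<le> norm (indicator {0..} x *\<^sub>R (K0 * (1/(x0^2+x^2))))"
    proof (rule AE_I2)
      fix x :: real
      show "norm (indicator {0..} x *\<^sub>R norm (sf m a j k lam x))
        \<le> norm (indicator {0..} x *\<^sub>R (K0 * (1/(x0^2+x^2))))"
        using bnd[of x] K00 by (auto simp: indicator_def)
    qed
  qed
  have "(\<integral>x\<in>{0..}. norm (sf m a j k lam x) \<partial>lborel) \<le> (\<integral>x\<in>{0..}. K0 * (1/(x0^2+x^2)) \<partial>lborel)"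
    by (rule set_integral_mono[OF INT IK]) (use bnd in auto)
  also have "\<dots> = K0 * (pi/(2*x0))" by (subst set_integral_mult_right) (simp only: IB(2))
  also have "\<dots> = (D*pi) * norm lam powr (- (1/2 + 1/real m))"
  proof -
    have "norm lam powr (- (1/2 + 1/real m)) = 1 / norm lam powr (1/2 + 1/real m)"
      by (rule powr_minus_divide)
    also have "\<dots> = 1 / (norm lam powr (1/2) * norm lam powr (1/real m))"
      by (simp only: powr_add)
    also have "\<dots> = 1 / (sqrt L * x0)"
      unfolding L_def x0_def by (simp add: powr_half_sqrt)
    finally have "norm lam powr (- (1/2 + 1/real m)) = 1 / (sqrt L * x0)" .
    then show ?thesis unfolding K0_def using L0 x00 by (simp add: field_simps)
  qed
  finally show ?thesis using INT by simp
qed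

theorem mainTheorem8:
  fixes m :: nat and \<delta> :: real and K :: "(nat \<Rightarrow> complex) set"
  assumes "m \<ge> 3"
    and "0 < \<delta>" and "\<delta> \<le> pi / (m + 2)"
    and "compact K"
  shows "\<exists>C R. \<forall>a\<in>K. \<forall>lam. norm lam \<ge> R \<and> \<bar>Arg lam\<bar> \<le> pi - \<delta> \<longrightarrow>
           (\<forall>j\<in>{1,2}. \<forall>k\<in>{1,2}.
              set_integrable lborel {0..} (\<lambda>x. norm (sf m a j k lam x)) \<and>
              (\<integral>x\<in>{0..}. norm (sf m a j k lam x) \<partial>lborel)
                \<le> C * norm lam powr (- (1/2 + 1/real m)))"
proof -
  have dpi: "\<delta> \<le> pi"
  proof -
    have "pi / (m + 2) \<le> pi / 1" by (rule divide_left_mono) auto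
    then show ?thesis using assms(3) by simp
  qed
  have cont: "continuous_on K (\<lambda>a. \<Sum>i=1..m. norm (a i))"
    by (intro continuous_intros continuous_on_subset[OF continuous_on_product_coordinates]) auto
  have "compact ((\<lambda>a. \<Sum>i=1..m. norm (a i)) ` K)"
    by (rule compact_continuous_image[OF cont assms(4)])
  then obtain B where B: "\<forall>y\<in>(\<lambda>a. \<Sum>i=1..m. norm (a i)) ` K. norm y \<le> B"
    using compact_imp_bounded bounded_iff by metis
  define A where "A = max B 0"
  have A0: "A \<ge> 0" unfolding A_def by simp
  have A: "(\<Sum>i=1..m. norm (a i)) \<le> A" if "a \<in> K" for a
  proof -
    have "norm (\<Sum>i=1..m. norm (a i)) \<le> B" using B that by blast
    then have "(\<Sum>i=1..m. norm (a i)) \<le> B" by simp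
    then show ?thesis unfolding A_def by linarith
  qed
  define c0 where "c0 = sqrt ((1 - cos \<delta>)/2)"
  define c where "c = c0/2"
  define B1 where "B1 = real m * (1+A)"
  define B2 where "B2 = real m * real m * (1+A)"
  define D where "D = 2*(B1^2/(32*c^2 * sqrt c) + (B2/(8*c * sqrt c) + 3*B1^2/(16*c^2 * sqrt c)))"
  define R where "R = max 1 (max ((2*A/c0)^m) ((B1/(4*c * sqrt c))^2))"
  show ?thesis
  proof (rule exI[of _ "D*pi"], rule exI[of _ R], intro ballI allI impI)
    fix a lam j k assume a: "a \<in> K" and lam: "R \<le> norm lam \<and> \<bar>Arg lam\<bar> \<le> pi - \<delta>"
      and j: "j \<in> {1::nat,2}" and k: "k \<in> {1::nat,2}"
    have L1: "norm lam \<ge> 1" using lam R_def by simp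
    have LA: "norm lam \<ge> (2*A/c0)^m" using lam R_def by simp
    have "sqrt (norm lam) \<ge> sqrt ((B1/(4*c * sqrt c))^2)"
      by (rule real_sqrt_le_mono) (use lam R_def in simp)
    then have Lg: "sqrt (norm lam) \<ge> B1/(4*c * sqrt c)"
      by (metis abs_ge_self order.trans real_sqrt_abs)
    show "set_integrable lborel {0..} (\<lambda>x. norm (sf m a j k lam x)) \<and>
              (\<integral>x\<in>{0..}. norm (sf m a j k lam x) \<partial>lborel)
                \<le> (D*pi) * norm lam powr (- (1/2 + 1/real m))"
      by (rule fixed[OF assms(1) assms(2) dpi A[OF a] conjunct2[OF lam] L1 c0_def c_def B1_def B2_def LA Lg D_def j k])
  qed
qed

end
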